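(* Consider a $K$-armed bandit with mean reward vector $\mathbf r$ and optimal arm $a^*=\arg\max_a r(a)$, and let $\boldsymbol\theta_t$ be the iterates of LB-SGB (defined in the context) with barrier parameter $\eta>0$. Then for every $t$, $$\pi_{\boldsymbol\theta_t}(a^* )\ge\Big(\frac1K\big(1-\eta\|\nabla\Phi_\eta(\boldsymbol\theta_t)\|_2\big)\Big)^+ ,$$ where $(x)^+=\max\{0,x\}$.
   Context: Softmax policy $\pi_{\boldsymbol\theta}(a)=e^{\theta(a)}/\sum_be^{\theta(b)}$; $\Phi_\eta(\boldsymbol\theta)=\pi_{\boldsymbol\theta}^\top\mathbf r+\frac1\eta\sum_a\log\pi_{\boldsymbol\theta}(a)$. LB-SGB with step size $\alpha$: start from $\boldsymbol\theta=\mathbf 0$; at round $t$ sample $a_t\sim\pi_{\boldsymbol\theta_t}$, observe a reward $R_t(a_t)$ (random with mean $r(a_t)$), set $\hat r_t(a)=\mathbb I\{a_t=a\}R_t(a_t)/\pi_{\boldsymbol\theta_t}(a)$ and update $\boldsymbol\theta_{t+1}=\boldsymbol\theta_t+\alpha\big[(\mathrm{diag}(\pi_{\boldsymbol\theta_t})-\pi_{\boldsymbol\theta_t}\pi_{\boldsymbol\theta_t}^\top)\hat{\mathbf r}_t+\frac1\eta(\mathbf 1-K\pi_{\boldsymbol\theta_t})\big]$. *)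

theory Defs
  imports "HOL-Analysis.Analysis"
begin

text \<open>Arms are the elements of a finite type 'a; K = CARD('a).
  Parameter vectors and reward vectors live in real^'a.\<close>

definition softmax :: "real^'a::finite \<Rightarrow> real^'a" where
  "softmax \<theta> = (\<chi> a. exp (\<theta> $ a) / (\<Sum>b\<in>UNIV. exp (\<theta> $ b)))"

definition Phi :: "real \<Rightarrow> real^'a::finite \<Rightarrow> real^'a \<Rightarrow> real" where
  "Phi \<eta> r \<theta> = softmax \<theta> \<bullet> r + (1 / \<eta>) * (\<Sum>a\<in>UNIV. ln (softmax \<theta> $ a))"

definition grad :: "(real^'a::finite \<Rightarrow> real) \<Rightarrow> real^'a \<Rightarrow> real^'a" where
  "grad f x = (THE g. GDERIV f x :> g)"

definition rhat :: "real^'a::finite \<Rightarrow> 'a \<Rightarrow> real \<Rightarrow> real^'a" where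
  "rhat \<theta> a R = (\<chi> b. if b = a then R / softmax \<theta> $ b else 0)"

text \<open>One LB-SGB update:
  theta + alpha ((diag pi - pi pi^T) rhat + (1/eta)(1 - K pi)).\<close>
definition lbsgb_step :: "real \<Rightarrow> real \<Rightarrow> real^'a::finite \<Rightarrow> 'a \<Rightarrow> real \<Rightarrow> real^'a" where
  "lbsgb_step \<alpha> \<eta> \<theta> a R =
     (let p = softmax \<theta>; g = rhat \<theta> a R in
      \<theta> + \<alpha> *\<^sub>R (\<chi> b. p $ b * g $ b - p $ b * (p \<bullet> g)
                         + (1 / \<eta>) * (1 - real CARD('a) * p $ b)))"

text \<open>Iterates of LB-SGB along a realisation: acts t is the arm sampled at round t,
  rews t the observed reward R_t(a_t). Start from theta_0 = 0.\<close>
fun lbsgb :: "real \<Rightarrow> real \<Rightarrow> (nat \<Rightarrow> 'a::finite) \<Rightarrow> (nat \<Rightarrow> real) \<Rightarrow> nat \<Rightarrow> real^'a" where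
  "lbsgb \<alpha> \<eta> acts rews 0 = 0"
| "lbsgb \<alpha> \<eta> acts rews (Suc t) =
     lbsgb_step \<alpha> \<eta> (lbsgb \<alpha> \<eta> acts rews t) (acts t) (rews t)"

end

theory Submission
  imports Defs
begin

lemma vec_nth_has_derivative[derivative_intros]:
  "((\<lambda>x::real^'n::finite. x $ i) has_derivative (\<lambda>h. h $ i)) F"
  by (rule bounded_linear.has_derivative[OF bounded_linear_vec_nth has_derivative_ident])

lemma Phi_alt:
  fixes r \<theta> :: "real^'a::finite"
  shows "Phi \<eta> r \<theta> = (\<Sum>a\<in>UNIV. exp (\<theta>$a) * r$a) / (\<Sum>b\<in>UNIV. exp (\<theta>$b))
      + (1/\<eta>) * (\<Sum>a\<in>UNIV. \<theta>$a - ln (\<Sum>b\<in>UNIV. exp (\<theta>$b)))"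
proof -
  have Zpos: "(\<Sum>b\<in>UNIV. exp (\<theta>$b)) > 0" by (simp add: sum_pos)
  have "softmax \<theta> \<bullet> r = (\<Sum>a\<in>UNIV. exp (\<theta>$a) * r$a) / (\<Sum>b\<in>UNIV. exp (\<theta>$b))"
    by (simp add: softmax_def inner_vec_def sum_divide_distrib)
  moreover have "\<And>a. ln (softmax \<theta> $ a) = \<theta>$a - ln (\<Sum>b\<in>UNIV. exp (\<theta>$b))"
    using Zpos by (simp add: softmax_def ln_div)
  ultimately show ?thesis by (simp add: Phi_def)
qed

definition gvec :: "real \<Rightarrow> real^'a::finite \<Rightarrow> real^'a \<Rightarrow> real^'a" where
  "gvec \<eta> r \<theta> = (\<chi> b. softmax \<theta> $ b * (r$b - softmax \<theta> \<bullet> r)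
       + (1/\<eta>) * (1 - real CARD('a) * softmax \<theta> $ b))"

lemma Phi_deriv:
  fixes r \<theta> :: "real^'a::finite"
  shows "(Phi \<eta> r has_derivative (\<lambda>h. h \<bullet> gvec \<eta> r \<theta>)) (at \<theta>)"
proof -
  define Z where "Z = (\<Sum>b\<in>UNIV. exp (\<theta>$b))"
  define N where "N = (\<Sum>a\<in>UNIV. exp (\<theta>$a) * r$a)"
  have Zpos: "Z > 0" unfolding Z_def by (simp add: sum_pos)
  have alt: "Phi \<eta> r = (\<lambda>x. (\<Sum>a\<in>UNIV. exp (x$a) * r$a) / (\<Sum>b\<in>UNIV. exp (x$b))
      + (1/\<eta>) * ((\<Sum>a\<in>UNIV. x$a) - real CARD('a) * ln (\<Sum>b\<in>UNIV. exp (x$b))))"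
    by (rule ext) (simp add: Phi_alt sum_subtractf)
  have hZ: "((\<lambda>x::real^'a. \<Sum>b\<in>UNIV. exp (x$b)) has_derivative (\<lambda>h. \<Sum>b\<in>UNIV. h$b * exp (\<theta>$b))) (at \<theta>)"
    by (auto intro!: derivative_eq_intros)
  have hN: "((\<lambda>x::real^'a. \<Sum>a\<in>UNIV. exp (x$a) * r$a) has_derivative (\<lambda>h. \<Sum>a\<in>UNIV. h$a * exp (\<theta>$a) * r$a)) (at \<theta>)"
    by (auto intro!: derivative_eq_intros)
  have hS: "((\<lambda>x::real^'a. \<Sum>a\<in>UNIV. x$a) has_derivative (\<lambda>h. \<Sum>a\<in>UNIV. h$a)) (at \<theta>)"
    by (auto intro!: derivative_eq_intros)
  have hL: "((\<lambda>x::real^'a. ln (\<Sum>b\<in>UNIV. exp (x$b))) has_derivative (\<lambda>h. (\<Sum>b\<in>UNIV. h$b * exp (\<theta>$b)) / Z)) (at \<theta>)"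
    using has_derivative_ln[OF _ hZ] Zpos unfolding Z_def by (simp add: divide_inverse mult.commute)
  have hQ: "((\<lambda>x::real^'a. (\<Sum>a\<in>UNIV. exp (x$a) * r$a) / (\<Sum>b\<in>UNIV. exp (x$b))) has_derivative
      (\<lambda>h. ((\<Sum>a\<in>UNIV. h$a * exp (\<theta>$a) * r$a) * Z - N * (\<Sum>b\<in>UNIV. h$b * exp (\<theta>$b))) / (Z * Z))) (at \<theta>)"
    using has_derivative_divide'[OF hN hZ] Zpos unfolding Z_def N_def by simp
  have hAll: "(Phi \<eta> r has_derivative (\<lambda>h. ((\<Sum>a\<in>UNIV. h$a * exp (\<theta>$a) * r$a) * Z - N * (\<Sum>b\<in>UNIV. h$b * exp (\<theta>$b))) / (Z * Z)
      + (1/\<eta>) * ((\<Sum>a\<in>UNIV. h$a) - real CARD('a) * ((\<Sum>b\<in>UNIV. h$b * exp (\<theta>$b)) / Z)))) (at \<theta>)"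
    unfolding alt
    by (intro has_derivative_add hQ has_derivative_mult_right has_derivative_diff hS hL)
  show ?thesis
  proof (rule has_derivative_eq_rhs[OF hAll], rule ext)
    fix h :: "real^'a"
    have sm: "softmax \<theta> $ b = exp (\<theta>$b) / Z" for b by (simp add: softmax_def Z_def)
    have pr: "softmax \<theta> \<bullet> r = N / Z"
      by (simp add: inner_vec_def sm N_def sum_divide_distrib)
    have "h \<bullet> gvec \<eta> r \<theta> = (\<Sum>b\<in>UNIV. h$b * (exp (\<theta>$b) / Z * (r$b - N/Z) + (1/\<eta>) * (1 - real CARD('a) * (exp (\<theta>$b) / Z))))"
      unfolding gvec_def pr by (simp add: inner_vec_def sm)
    also have "\<dots> = (\<Sum>b\<in>UNIV. h$b * exp (\<theta>$b) * r$b) / Z - (N/Z) * (\<Sum>b\<in>UNIV. h$b * exp (\<theta>$b)) / Z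
        + (1/\<eta>) * ((\<Sum>b\<in>UNIV. h$b) - real CARD('a) * ((\<Sum>b\<in>UNIV. h$b * exp (\<theta>$b)) / Z))"
      by (simp add: algebra_simps sum.distrib sum_subtractf sum_distrib_left sum_divide_distrib)
    also have "\<dots> = ((\<Sum>a\<in>UNIV. h$a * exp (\<theta>$a) * r$a) * Z - N * (\<Sum>b\<in>UNIV. h$b * exp (\<theta>$b))) / (Z * Z)
      + (1/\<eta>) * ((\<Sum>a\<in>UNIV. h$a) - real CARD('a) * ((\<Sum>b\<in>UNIV. h$b * exp (\<theta>$b)) / Z))"
      using Zpos by (simp add: field_simps)
    finally show "((\<Sum>a\<in>UNIV. h$a * exp (\<theta>$a) * r$a) * Z - N * (\<Sum>b\<in>UNIV. h$b * exp (\<theta>$b))) / (Z * Z)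
      + (1/\<eta>) * ((\<Sum>a\<in>UNIV. h$a) - real CARD('a) * ((\<Sum>b\<in>UNIV. h$b * exp (\<theta>$b)) / Z)) = h \<bullet> gvec \<eta> r \<theta>"
      by simp
  qed
qed

lemma grad_Phi: "grad (Phi \<eta> r) \<theta> = gvec \<eta> r \<theta>"
  unfolding grad_def gderiv_def
proof (rule the_equality)
  show "(Phi \<eta> r has_derivative (\<lambda>h. h \<bullet> gvec \<eta> r \<theta>)) (at \<theta>)" by (rule Phi_deriv)
next
  fix g assume "(Phi \<eta> r has_derivative (\<lambda>h. h \<bullet> g)) (at \<theta>)"
  hence eq: "(\<lambda>h. h \<bullet> g) = (\<lambda>h. h \<bullet> gvec \<eta> r \<theta>)"
    using Phi_deriv has_derivative_unique by blast
  show "g = gvec \<eta> r \<theta>"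
  proof (subst vec_eq_iff, intro allI)
    fix i show "g $ i = gvec \<eta> r \<theta> $ i"
      using fun_cong[OF eq, of "axis i 1"] by (simp add: cart_eq_inner_axis inner_commute)
  qed
qed

lemma softmax_pos: "softmax \<theta> $ a > 0"
  by (simp add: softmax_def sum_pos)

lemma softmax_sum: "(\<Sum>b\<in>UNIV. softmax \<theta> $ b) = 1"
proof -
  have "(\<Sum>b\<in>UNIV. exp (\<theta>$b)) > 0" by (simp add: sum_pos)
  thus ?thesis by (simp add: softmax_def sum_divide_distrib[symmetric])
qed

lemma main_bound:
  fixes r \<theta> :: "real^'a::finite" and astar :: 'a and \<eta> :: real
  assumes "\<eta> > 0" and "\<forall>a. r $ a \<le> r $ astar"
  shows "softmax \<theta> $ astar \<ge> max 0 ((1 / real CARD('a)) * (1 - \<eta> * norm (grad (Phi \<eta> r) \<theta>)))"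
proof -
  let ?p = "softmax \<theta>"
  let ?K = "real CARD('a)"
  have Kpos: "?K > 0" by simp
  have pr: "?p \<bullet> r \<le> r $ astar"
  proof -
    have "?p \<bullet> r = (\<Sum>b\<in>UNIV. ?p $ b * r $ b)" by (simp add: inner_vec_def)
    also have "\<dots> \<le> (\<Sum>b\<in>UNIV. ?p $ b * r $ astar)"
      by (intro sum_mono mult_left_mono) (use assms(2) softmax_pos[THEN less_imp_le] in auto)
    also have "\<dots> = r $ astar" by (simp add: sum_distrib_right[symmetric] softmax_sum)
    finally show ?thesis .
  qed
  have g: "grad (Phi \<eta> r) \<theta> $ astar = ?p $ astar * (r $ astar - ?p \<bullet> r) + (1/\<eta>) * (1 - ?K * ?p $ astar)"
    by (simp add: grad_Phi gvec_def)
  have "?p $ astar * (r $ astar - ?p \<bullet> r) \<ge> 0"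
    using pr softmax_pos[THEN less_imp_le, of \<theta> astar] by (intro mult_nonneg_nonneg) auto
  hence "\<eta> * grad (Phi \<eta> r) \<theta> $ astar \<ge> 1 - ?K * ?p $ astar"
    using assms(1) unfolding g by (simp add: algebra_simps)
  moreover have "grad (Phi \<eta> r) \<theta> $ astar \<le> norm (grad (Phi \<eta> r) \<theta>)"
    using component_le_norm_cart abs_le_D1 order_trans by blast
  ultimately have "1 - ?K * ?p $ astar \<le> \<eta> * norm (grad (Phi \<eta> r) \<theta>)"
    using assms(1) by (smt (verit) mult_left_mono)
  hence "(1 / ?K) * (1 - \<eta> * norm (grad (Phi \<eta> r) \<theta>)) \<le> ?p $ astar"
    using Kpos by (simp add: field_simps)
  thus ?thesis using softmax_pos[of \<theta> astar] by simp
qed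

theorem lemma5p3:
  fixes r :: "real^'a::finite" and astar :: 'a
    and \<alpha> \<eta> :: real and acts :: "nat \<Rightarrow> 'a" and rews :: "nat \<Rightarrow> real" and t :: nat
  assumes "\<eta> > 0"
    and "\<forall>a. r $ a \<le> r $ astar"
  shows "softmax (lbsgb \<alpha> \<eta> acts rews t) $ astar
           \<ge> max 0 ((1 / real CARD('a)) *
                (1 - \<eta> * norm (grad (Phi \<eta> r) (lbsgb \<alpha> \<eta> acts rews t))))"
  using main_bound[OF assms] .

end
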